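(* Let $k\ge2$, $\eta\in[0,1)$ and $c>0$. The equation $(1-\zeta)\,x_k^\ast(c,\zeta)^k\,c^{-k}=\eta$ has a unique solution $\zeta\in[0,1]$. Moreover, if $c<\overline c_k(\eta)$ then this solution satisfies $(k-1)\zeta c^{k-1}<e$.
   Context: $W$ is the Lambert $W$ function; $x_k^\ast(c,\zeta)=\left(\frac{W((k-1)c^{k-1}\zeta)}{(k-1)\zeta}\right)^{\frac1{k-1}}$ for $\zeta\in(0,1]$ and $x_k^\ast(c,0)=c$. $\eta_k^\ast=e^{-k/(k-1)}$; $\overline c_k(\eta)=\left(\frac{e}{(k-1)(1-\eta/\eta_k^\ast)}\right)^{\frac1{k-1}}$ if $\eta<\eta_k^\ast$ and $+\infty$ otherwise. *)

theory Defs
  imports "HOL-Analysis.Analysis" "HOL-Library.Extended_Real"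
begin

text \<open>Principal branch of the Lambert W function on its domain x \<ge> -1/e:
  the unique w \<ge> -1 with w * exp w = x.\<close>
definition lambertW :: "real \<Rightarrow> real" where
  "lambertW x = (THE w. w \<ge> -1 \<and> w * exp w = x)"

definition xstar :: "nat \<Rightarrow> real \<Rightarrow> real \<Rightarrow> real" where
  "xstar k c \<zeta> =
     (if \<zeta> = 0 then c
      else (lambertW (real (k - 1) * c ^ (k - 1) * \<zeta>) / (real (k - 1) * \<zeta>))
             powr (1 / real (k - 1)))"

definition etastar :: "nat \<Rightarrow> real" where
  "etastar k = exp (- (real k / real (k - 1)))"

definition cbar :: "nat \<Rightarrow> real \<Rightarrow> ereal" where
  "cbar k \<eta> =
     (if \<eta> < etastar k
      then ereal ((exp 1 / (real (k - 1) * (1 - \<eta> / etastar k))) powr (1 / real (k - 1)))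
      else \<infinity>)"

end

theory Submission
  imports Defs
begin

lemma wexp_mono: "0 \<le> (u::real) \<Longrightarrow> u < v \<Longrightarrow> u * exp u < v * exp v"
proof -
  assume h: "0 \<le> u" "u < v"
  have "u * exp u \<le> u * exp v" using h by (intro mult_left_mono) auto
  also have "\<dots> < v * exp v" using h by (intro mult_strict_right_mono) auto
  finally show ?thesis .
qed

lemma lw_unique: assumes "0 \<le> w" "w * exp w = a" shows "lambertW a = w"
  unfolding lambertW_def
proof (rule the_equality)
  show "w \<ge> -1 \<and> w * exp w = a" using assms by auto
next
  fix v assume v: "v \<ge> -1 \<and> v * exp v = a"
  have "a \<ge> 0" using assms by (metis exp_ge_zero zero_le_mult_iff)
  hence "v \<ge> 0" using v by (smt (verit) exp_gt_zero mult_neg_pos)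
  show "v = w"
  proof (cases v w rule: linorder_cases)
    case less then show ?thesis using wexp_mono[of v w] \<open>v \<ge> 0\<close> v assms by auto
  next
    case greater then show ?thesis using wexp_mono[of w v] v assms by auto
  qed simp
qed

lemma lw_ex: assumes "0 \<le> (a::real)" shows "lambertW a \<ge> 0 \<and> lambertW a * exp (lambertW a) = a"
proof -
  have "a \<le> a * exp a" using assms by (simp add: mult_le_cancel_left1)
  moreover have "continuous_on {0..a} (\<lambda>w. w * exp w)" by (intro continuous_intros)
  ultimately obtain w where w: "0 \<le> w" "w \<le> a" "w * exp w = a"
    using IVT'[of "\<lambda>w. w * exp w" 0 a a] assms by auto
  then show ?thesis using lw_unique[OF w(1) w(3)] by simp
qed

lemma lw_mono: assumes "0 \<le> a" "a \<le> b" shows "lambertW a \<le> lambertW b"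
proof (rule ccontr)
  assume "\<not> ?thesis"
  then have "lambertW b * exp (lambertW b) < lambertW a * exp (lambertW a)"
    using wexp_mono[of "lambertW b" "lambertW a"] lw_ex[of b] assms by auto
  then show False using lw_ex assms by auto
qed

lemma xstar_eq:
  assumes k: "k \<ge> 2" and c: "c > 0" and z: "0 \<le> z"
  shows "xstar k c z = c * exp (- lambertW (real (k-1) * c^(k-1) * z) / real (k-1))"
proof (cases "z = 0")
  case True
  have "lambertW 0 = 0" by (rule lw_unique) auto
  then show ?thesis using True by (simp add: xstar_def)
next
  case False
  define m where "m = real (k-1)"
  define W where "W = lambertW (m * c^(k-1) * z)"
  have m: "m > 0" using k by (simp add: m_def)
  have zp: "z > 0" using z False by simp
  have WW: "W \<ge> 0" "W * exp W = m * c^(k-1) * z"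
    using lw_ex[of "m * c^(k-1) * z"] m c zp unfolding W_def by auto
  have "W / (m * z) = c^(k-1) * exp (-W)"
    using WW m zp by (simp add: field_simps exp_minus)
  hence "xstar k c z = (c^(k-1) * exp (-W)) powr (1/m)"
    using False by (simp add: xstar_def W_def m_def)
  also have "\<dots> = (c^(k-1)) powr (1/m) * exp (-W) powr (1/m)"
    using c by (simp add: powr_mult)
  also have "(c^(k-1)) powr (1/m) = c"
  proof -
    have "c^(k-1) = c powr m" using c by (simp add: m_def powr_realpow)
    then show ?thesis using c m by (simp add: powr_powr)
  qed
  also have "exp (-W) powr (1/m) = exp (- W / m)" by (simp add: powr_def)
  finally show ?thesis by (simp add: W_def m_def)
qed

lemma F_eq:
  assumes k: "k \<ge> 2" and c: "c > 0" and z: "0 \<le> z"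
  shows "(1 - z) * xstar k c z ^ k / c ^ k
     = (1 - z) * exp (- (real k / real (k-1)) * lambertW (real (k-1) * c^(k-1) * z))"
proof -
  have "xstar k c z ^ k = c^k * exp (- lambertW (real (k-1) * c^(k-1) * z) / real (k-1)) ^ k"
    using xstar_eq[OF k c z] by (simp add: power_mult_distrib)
  also have "exp (- lambertW (real (k-1) * c^(k-1) * z) / real (k-1)) ^ k
     = exp (- (real k / real (k-1)) * lambertW (real (k-1) * c^(k-1) * z))"
    by (simp add: exp_of_nat_mult[symmetric])
  finally show ?thesis using c by simp
qed


theorem mainTheorem14:
  fixes k :: nat and \<eta> c :: real
  assumes "k \<ge> 2" and "0 \<le> \<eta>" and "\<eta> < 1" and "c > 0"
  shows "(\<exists>!\<zeta>. \<zeta> \<in> {0..1} \<and> (1 - \<zeta>) * xstar k c \<zeta> ^ k / c ^ k = \<eta>)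
       \<and> (ereal c < cbar k \<eta> \<longrightarrow>
           (\<forall>\<zeta>\<in>{0..1}. (1 - \<zeta>) * xstar k c \<zeta> ^ k / c ^ k = \<eta> \<longrightarrow>
              real (k - 1) * \<zeta> * c ^ (k - 1) < exp 1))"
proof -
  define m where "m = real (k-1)"
  define A where "A = m * c^(k-1)"
  define W where "W = (\<lambda>z. lambertW (A * z))"
  define g where "g = (\<lambda>w. (1 - w * exp w / A) * exp (- (real k / m) * w))"
  define F where "F = (\<lambda>z. (1 - z) * xstar k c z ^ k / c ^ k)"
  have m: "m > 0" using assms(1) by (simp add: m_def)
  have A: "A > 0" using m assms(4) by (simp add: A_def)
  have FW: "F z = (1 - z) * exp (- (real k / m) * W z)" if "0 \<le> z" for z
    using F_eq[OF assms(1) assms(4) that] by (simp add: F_def W_def A_def m_def)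
  have Wp: "W z \<ge> 0" "W z * exp (W z) = A * z" if "0 \<le> z" for z
    using lw_ex[of "A * z"] A that by (auto simp: W_def)
  have Fg: "F z = g (W z)" if "0 \<le> z" for z
    using FW[OF that] Wp[OF that] A by (simp add: g_def)
  have strict: "F z2 < F z1" if "0 \<le> z1" "z1 < z2" "z2 \<le> 1" for z1 z2
  proof -
    have "W z1 \<le> W z2" unfolding W_def using that A by (intro lw_mono) auto
    hence e: "exp (- (real k / m) * W z2) \<le> exp (- (real k / m) * W z1)"
      using m by (simp add: mult_left_mono divide_right_mono)
    have "F z2 = (1 - z2) * exp (- (real k / m) * W z2)" using FW that by simp
    also have "\<dots> \<le> (1 - z2) * exp (- (real k / m) * W z1)"
      using e that by (intro mult_left_mono) auto
    also have "\<dots> < (1 - z1) * exp (- (real k / m) * W z1)"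
      using that by (intro mult_strict_right_mono) auto
    also have "\<dots> = F z1" using FW that by simp
    finally show ?thesis .
  qed
  have ex: "\<exists>z. z \<in> {0..1} \<and> F z = \<eta>"
  proof -
    define W1 where "W1 = W 1"
    have W1: "W1 \<ge> 0" "W1 * exp W1 = A" using Wp[of 1] by (auto simp: W1_def)
    have "g W1 = 0" using W1 A by (simp add: g_def)
    moreover have "g 0 = 1" by (simp add: g_def)
    moreover have "continuous_on {0..W1} g" unfolding g_def using A by (intro continuous_intros) auto
    ultimately obtain w where w: "0 \<le> w" "w \<le> W1" "g w = \<eta>"
      using IVT2'[of g W1 \<eta> 0] assms W1 by auto
    define z where "z = w * exp w / A"
    have z0: "z \<ge> 0" using w A by (simp add: z_def)
    have "w * exp w \<le> W1 * exp W1"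
      using w wexp_mono[of w W1] by (cases "w = W1") auto
    hence z1: "z \<le> 1" using W1 A by (simp add: z_def)
    have "W z = w" unfolding W_def using A by (intro lw_unique) (auto simp: z_def w)
    hence "F z = \<eta>" using Fg[OF z0] w by simp
    then show ?thesis using z0 z1 by auto
  qed
  have part1: "\<exists>!z. z \<in> {0..1} \<and> F z = \<eta>"
  proof -
    obtain z where z: "z \<in> {0..1}" "F z = \<eta>" using ex by blast
    have "y = z" if "y \<in> {0..1}" "F y = \<eta>" for y
    proof (cases y z rule: linorder_cases)
      case less then show ?thesis using strict[of y z] z that by auto
    next
      case greater then show ?thesis using strict[of z y] z that by auto
    qed simp
    then show ?thesis using z by blast
  qed
  have part2: "m * z * c^(k-1) < exp 1" if cb: "ereal c < cbar k \<eta>" and z: "z \<in> {0..1}" "F z = \<eta>" for z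
  proof (rule ccontr)
    assume "\<not> ?thesis"
    hence Az: "A * z \<ge> exp 1" by (simp add: A_def mult_ac)
    have z0: "0 \<le> z" "z \<le> 1" using z by auto
    have W1: "W z \<ge> 1"
    proof (rule ccontr)
      assume "\<not> W z \<ge> 1"
      hence "W z * exp (W z) < 1 * exp 1" using wexp_mono[of "W z" 1] Wp[OF z0(1)] by simp
      then show False using Wp[OF z0(1)] Az by simp
    qed
    have zp: "z > 0" using Az z0 by (cases "z = 0") auto
    have es: "etastar k > 0" by (simp add: etastar_def)
    have "\<eta> = (1 - z) * exp (- (real k / m) * W z)" using FW z by simp
    also have "\<dots> \<le> (1 - z) * etastar k"
      unfolding etastar_def m_def[symmetric] using W1 m z0
      by (intro mult_left_mono) (auto simp: mult_le_cancel_left1 divide_nonneg_nonneg divide_right_mono)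
    finally have le: "\<eta> \<le> (1 - z) * etastar k" .
    show False
    proof (cases "\<eta> < etastar k")
      case False
      have "(1 - z) * etastar k < etastar k" using zp es by simp
      then show False using le False by simp
    next
      case True
      define B where "B = exp 1 / (m * (1 - \<eta> / etastar k))"
      have q: "1 - \<eta> / etastar k > 0" using True es by simp
      have B: "B > 0" using q m by (simp add: B_def)
      have "c < B powr (1/m)" using cb True by (simp add: cbar_def B_def m_def)
      hence "c powr m < (B powr (1/m)) powr m"
        using assms(4) m by (intro powr_less_mono2) auto
      also have "\<dots> = B" using B m by (simp add: powr_powr)
      finally have "c^(k-1) < B" using assms(4) by (simp add: m_def powr_realpow)
      hence "m * c^(k-1) * (1 - \<eta> / etastar k) < m * B * (1 - \<eta> / etastar k)"
        using m q by simp
      also have "m * B * (1 - \<eta> / etastar k) = exp 1" using m q True by (simp add: B_def)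
      finally have "A * (1 - \<eta> / etastar k) < exp 1" by (simp add: A_def)
      hence "A * (1 - \<eta> / etastar k) < A * z" using Az by simp
      hence "1 - \<eta> / etastar k < z" using A by simp
      hence "(1 - z) * etastar k < \<eta>" using es by (simp add: field_simps)
      then show False using le by simp
    qed
  qed
  show ?thesis using part1 part2 by (simp add: F_def m_def)
qed

end
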